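(* Let $f:\mathbb{R}^n\to\mathbb{R}^n$ be locally Lipschitz with $f(0)=0$, let $z(t,x)$ denote the solution of $\dot z=f(z)$ with $z(0)=x$, and let $V\in C^1(\mathbb{R}^n;\mathbb{R}^+)$ be a Lyapunov function for $\dot z=f(z)$. Then: (i) There exists a locally Lipschitz positive definite $W:\mathbb{R}^n\to\mathbb{R}^+$ with $W(x)\le-\nabla V(x)f(x)$ for all $x\in\mathbb{R}^n$. (ii) Let $l_f:\mathbb{R}^n\to(0,+\infty)$ be continuous with $l_f(x)\ge\sup\{|f(y)-f(z)|/|y-z|: y\ne z,\ \max\{V(y),V(z)\}\le V(x)\}$ for all $x\ne0$. Then for every $b>0$ there exists a continuous positive definite $\tilde W:\mathbb{R}^n\to\mathbb{R}^+$ such that $V(z(h,x))\le V(x)-h\tilde W(x)$ for all $x\in\mathbb{R}^n$ and all $h\in[0,b/l_f(x)]$. (iii) Let $b>0$, let $l_f$ be as in (ii), let $W$ be a locally Lipschitz positive definite function with $W(x)\le-\nabla V(x)f(x)$ for all $x$, and let $l_W^b:\mathbb{R}^n\to\mathbb{R}^+$ be continuous, positive definite, with $l_W^b(x)\ge\sup\{|W(y)-W(z)|/|y-z|: y\ne z,\ \max\{|y|,|z|\}\le\exp(b)|x|\}$ for all $x\ne0$. If there exist $\varepsilon,c>0$ with $|x|\,l_W^b(x)\le cW(x)$ for all $x\in B_\varepsilon(0)$, then for each $\lambda\in(0,1)$ and each continuous $\varphi:\mathbb{R}^n\to(0,+\infty)$ satisfying $$\varphi(x)\le\min\Big\{\frac{b}{l_f(x)},\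 \frac{(1-\lambda)\exp(-b)W(x)}{|x|\,l_W^b(x)\,l_f(x)}\Big\}\quad\forall x\ne0,$$ one has $V(z(h,x))\le V(x)-\lambda hW(x)$ for all $x\in\mathbb{R}^n$ and $h\in[0,\varphi(x)]$.
   Context: A Lyapunov function for $\dot z=f(z)$ is a positive definite, radially unbounded $V\in C^1(\mathbb{R}^n;\mathbb{R}^+)$ with $\nabla V(x)f(x)<0$ for all $x\ne0$. Positive definite means $V(0)=0$ and $V(x)>0$ for $x\ne0$; radially unbounded means every sublevel set $\{V\le M\}$ is compact. $B_\varepsilon(0)$ is the open ball of radius $\varepsilon$ centered at 0. *)

theory Defs
  imports "HOL-Analysis.Analysis"
begin

definition loc_lipschitz :: "('a::metric_space \<Rightarrow> 'b::metric_space) \<Rightarrow> bool" where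
  "loc_lipschitz g \<longleftrightarrow> (\<forall>x. \<exists>u>0. \<exists>L. lipschitz_on L (cball x u) g)"

definition pos_def :: "('a::real_vector \<Rightarrow> real) \<Rightarrow> bool" where
  "pos_def g \<longleftrightarrow> g 0 = 0 \<and> (\<forall>x. x \<noteq> 0 \<longrightarrow> g x > 0)"

definition rad_unbounded :: "('a::real_normed_vector \<Rightarrow> real) \<Rightarrow> bool" where
  "rad_unbounded g \<longleftrightarrow> (\<forall>M. compact {x. g x \<le> M})"

definition C1_with_gradient :: "('a::euclidean_space \<Rightarrow> real) \<Rightarrow> ('a \<Rightarrow> 'a) \<Rightarrow> bool" where
  "C1_with_gradient V gV \<longleftrightarrow> continuous_on UNIV gV \<and>
     (\<forall>x. (V has_derivative (\<lambda>v. gV x \<bullet> v)) (at x))"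

definition lyapunov :: "('a::euclidean_space \<Rightarrow> real) \<Rightarrow> ('a \<Rightarrow> 'a) \<Rightarrow> ('a \<Rightarrow> 'a) \<Rightarrow> bool" where
  "lyapunov V gV f \<longleftrightarrow> C1_with_gradient V gV \<and> pos_def V \<and> rad_unbounded V \<and>
     (\<forall>x. x \<noteq> 0 \<longrightarrow> gV x \<bullet> f x < 0)"

definition is_flow :: "('a::euclidean_space \<Rightarrow> 'a) \<Rightarrow> (real \<Rightarrow> 'a \<Rightarrow> 'a) \<Rightarrow> bool" where
  "is_flow f z \<longleftrightarrow> (\<forall>x. z 0 x = x \<and>
     (\<forall>t\<ge>0. ((\<lambda>s. z s x) has_vector_derivative f (z t x)) (at t within {0..})))"

end

theory Submission
  imports Defs
begin

lemma flow_deriv: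
  assumes "is_flow f z" "t > 0"
  shows "((\<lambda>s. z s x) has_vector_derivative f (z t x)) (at t)"
proof -
  have "((\<lambda>s. z s x) has_vector_derivative f (z t x)) (at t within {0..})"
    using assms unfolding is_flow_def by auto
  moreover have "at t within {0..} = at t"
    using assms(2) by (intro at_within_interior) auto
  ultimately show ?thesis by simp
qed

lemma flow_cont:
  assumes "is_flow f z"
  shows "continuous_on {0..} (\<lambda>s. z s x)"
  using assms unfolding is_flow_def
  by (intro continuous_on_vector_derivative) auto

lemma V_cont:
  assumes "C1_with_gradient V gV"
  shows "continuous_on UNIV V"
proof -
  have "\<forall>x. isCont V x" using assms unfolding C1_with_gradient_def
    by (meson has_derivative_continuous)
  thus ?thesis by (simp add: continuous_on_eq_continuous_at)
qed

lemma V_deriv: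
  assumes "C1_with_gradient V gV" "is_flow f z" "t > 0"
  shows "((\<lambda>s. V (z s x)) has_real_derivative (gV (z t x) \<bullet> f (z t x))) (at t)"
proof -
  have d1: "((\<lambda>s. z s x) has_derivative (\<lambda>h. h *\<^sub>R f (z t x))) (at t)"
    using flow_deriv[OF assms(2,3)] by (simp add: has_vector_derivative_def)
  have d2: "(V has_derivative (\<lambda>v. gV (z t x) \<bullet> v)) (at (z t x))"
    using assms(1) unfolding C1_with_gradient_def by auto
  have "((V \<circ> (\<lambda>s. z s x)) has_derivative ((\<lambda>v. gV (z t x) \<bullet> v) \<circ> (\<lambda>h. h *\<^sub>R f (z t x)))) (at t)"
    by (rule diff_chain_at[OF d1 d2])
  moreover have "((\<lambda>v. gV (z t x) \<bullet> v) \<circ> (\<lambda>h. h *\<^sub>R f (z t x))) = (\<lambda>h. (gV (z t x) \<bullet> f (z t x)) * h)"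
    by (auto simp: fun_eq_iff)
  ultimately show ?thesis by (simp add: has_field_derivative_def o_def)
qed

lemma V_comp_cont:
  assumes "C1_with_gradient V gV" "is_flow f z"
  shows "continuous_on {0..} (\<lambda>s. V (z s x))"
  using continuous_on_compose2[OF V_cont[OF assms(1)] flow_cont[OF assms(2)]] by auto

lemma V_bound:
  assumes C1: "C1_with_gradient V gV" and fl: "is_flow f z" and h: "h \<ge> 0"
    and der: "\<And>t. 0 < t \<Longrightarrow> t < h \<Longrightarrow> gV (z t x) \<bullet> f (z t x) \<le> - A + K * t"
  shows "V (z h x) \<le> V (z 0 x) - A * h + K * h^2 / 2"
proof -
  let ?p = "\<lambda>s. V (z s x) + A * s - K * s^2 / 2"
  have "?p 0 \<ge> ?p h"
  proof (rule DERIV_nonpos_imp_decreasing_open[OF h])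
    fix t assume t: "0 < t" "t < h"
    have "(?p has_real_derivative (gV (z t x) \<bullet> f (z t x) + A - K * t)) (at t)"
      using V_deriv[OF C1 fl t(1)] by (auto intro!: derivative_eq_intros)
    thus "\<exists>y. (?p has_real_derivative y) (at t) \<and> y \<le> 0" using der[OF t] by force
  next
    have "continuous_on {0..h} (\<lambda>s. V (z s x))"
      by (rule continuous_on_subset[OF V_comp_cont[OF C1 fl]]) auto
    thus "continuous_on {0..h} ?p" by (intro continuous_intros) auto
  qed
  thus ?thesis by simp
qed

lemma V_mono:
  assumes C1: "C1_with_gradient V gV" and fl: "is_flow f z"
    and neg: "\<And>y. gV y \<bullet> f y \<le> 0" and st: "0 \<le> s" "s \<le> t"
  shows "V (z t x) \<le> V (z s x)"
proof (rule DERIV_nonpos_imp_decreasing_open[OF st(2)])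
  fix u assume "s < u" "u < t"
  thus "\<exists>y. ((\<lambda>s. V (z s x)) has_real_derivative y) (at u) \<and> y \<le> 0"
    using V_deriv[OF C1 fl, of u x] neg st by force
next
  show "continuous_on {s..t} (\<lambda>s. V (z s x))"
    by (rule continuous_on_subset[OF V_comp_cont[OF C1 fl]]) (use st in auto)
qed

lemma sq_deriv:
  assumes "is_flow f z" "t > 0"
  shows "((\<lambda>s. z s x \<bullet> z s x) has_real_derivative (2 * (z t x \<bullet> f (z t x)))) (at t)"
proof -
  have d1: "((\<lambda>s. z s x) has_derivative (\<lambda>h. h *\<^sub>R f (z t x))) (at t)"
    using flow_deriv[OF assms] by (simp add: has_vector_derivative_def)
  have "((\<lambda>s. z s x \<bullet> z s x) has_derivative (\<lambda>h. z t x \<bullet> (h *\<^sub>R f (z t x)) + (h *\<^sub>R f (z t x)) \<bullet> z t x)) (at t)"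
    by (rule has_derivative_inner[OF d1 d1])
  moreover have "(\<lambda>h. z t x \<bullet> (h *\<^sub>R f (z t x)) + (h *\<^sub>R f (z t x)) \<bullet> z t x) = (\<lambda>h. (2 * (z t x \<bullet> f (z t x))) * h)"
    by (auto simp: fun_eq_iff inner_commute algebra_simps)
  ultimately show ?thesis by (simp add: has_field_derivative_def)
qed

lemma gronwall_norm:
  assumes fl: "is_flow f z" and L: "L \<ge> 0" and h: "h \<ge> 0"
    and bnd: "\<And>t. 0 < t \<Longrightarrow> t < h \<Longrightarrow> norm (f (z t x)) \<le> L * norm (z t x)"
  shows "norm (z h x) \<le> exp (L * h) * norm (z 0 x)"
proof -
  let ?u = "\<lambda>s. exp (- (2 * L * s)) * (z s x \<bullet> z s x)"
  have "?u 0 \<ge> ?u h"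
  proof (rule DERIV_nonpos_imp_decreasing_open[OF h])
    fix t assume t: "0 < t" "t < h"
    have "(?u has_real_derivative (exp (- (2 * L * t)) * (- (2 * L)) * (z t x \<bullet> z t x) + exp (- (2 * L * t)) * (2 * (z t x \<bullet> f (z t x))))) (at t)"
      using sq_deriv[OF fl t(1)] by (auto intro!: derivative_eq_intros)
    moreover have "exp (- (2 * L * t)) * (- (2 * L)) * (z t x \<bullet> z t x) + exp (- (2 * L * t)) * (2 * (z t x \<bullet> f (z t x))) \<le> 0"
    proof -
      have "z t x \<bullet> f (z t x) \<le> norm (z t x) * norm (f (z t x))" by (rule norm_cauchy_schwarz)
      also have "\<dots> \<le> norm (z t x) * (L * norm (z t x))" using bnd[OF t] by (simp add: mult_left_mono)
      finally have "z t x \<bullet> f (z t x) \<le> L * (z t x \<bullet> z t x)" by (simp add: power2_norm_eq_inner[symmetric] power2_eq_square algebra_simps)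
      hence "(- (2 * L)) * (z t x \<bullet> z t x) + (2 * (z t x \<bullet> f (z t x))) \<le> 0" by simp
      hence "exp (- (2 * L * t)) * ((- (2 * L)) * (z t x \<bullet> z t x) + (2 * (z t x \<bullet> f (z t x)))) \<le> 0"
        by (simp add: mult_nonneg_nonpos)
      thus ?thesis by (simp add: algebra_simps)
    qed
    ultimately show "\<exists>y. (?u has_real_derivative y) (at t) \<and> y \<le> 0" by blast
  next
    show "continuous_on {0..h} ?u"
      using continuous_on_subset[OF flow_cont[OF fl]] by (intro continuous_intros) auto
  qed
  hence "z h x \<bullet> z h x \<le> exp (2 * L * h) * (z 0 x \<bullet> z 0 x)"
    by (simp add: exp_minus field_simps)
  hence "(norm (z h x))^2 \<le> (exp (L * h) * norm (z 0 x))^2"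
    by (simp add: power2_norm_eq_inner power_mult_distrib exp_double[symmetric] mult.assoc)
  thus ?thesis by (rule power2_le_imp_le) simp
qed

lemma disp:
  assumes fl: "is_flow f z" and s: "s \<ge> 0"
    and bnd: "\<And>t. 0 < t \<Longrightarrow> t < s \<Longrightarrow> norm (f (z t x)) \<le> B"
  shows "norm (z s x - x) \<le> s * B"
proof (cases "s = 0")
  case True thus ?thesis using fl by (simp add: is_flow_def)
next
  case False
  hence s0: "0 < s" using s by simp
  have "\<exists>t\<in>{0<..<s}. norm (z s x - z 0 x) \<le> norm ((s - 0) *\<^sub>R f (z t x))"
  proof (rule mvt_general[OF s0])
    show "continuous_on {0..s} (\<lambda>s. z s x)" by (rule continuous_on_subset[OF flow_cont[OF fl]]) auto
    fix t assume "0 < t" "t < s"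
    thus "((\<lambda>s. z s x) has_derivative (\<lambda>h. h *\<^sub>R f (z t x))) (at t)"
      using flow_deriv[OF fl] by (simp add: has_vector_derivative_def)
  qed
  then obtain t where t: "0 < t" "t < s" "norm (z s x - z 0 x) \<le> norm (s *\<^sub>R f (z t x))" by auto
  have "norm (s *\<^sub>R f (z t x)) \<le> s * B" using bnd[OF t(1,2)] s0 by (simp add: mult_left_mono)
  thus ?thesis using t(3) fl by (simp add: is_flow_def)
qed

lemma fbnd:
  assumes f0: "f 0 = 0" and V0: "V 0 = 0" and Vx: "V y \<le> V x" and Vnn: "V x \<ge> 0"
    and lfh: "\<forall>y w. y \<noteq> w \<and> max (V y) (V w) \<le> V x \<longrightarrow> norm (f y - f w) / norm (y - w) \<le> L"
  shows "norm (f y) \<le> L * norm y"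
proof (cases "y = 0")
  case True thus ?thesis using f0 by simp
next
  case False
  have "max (V y) (V 0) \<le> V x" using Vx Vnn V0 by (simp add: max_def)
  hence "norm (f y - f 0) / norm (y - 0) \<le> L" using lfh False by blast
  thus ?thesis using False f0 by (simp add: divide_le_eq mult.commute)
qed

lemma traj:
  assumes C1: "C1_with_gradient V gV" and fl: "is_flow f z"
    and neg: "\<And>y. gV y \<bullet> f y \<le> 0" and V0: "V 0 = 0" and Vnn: "V x \<ge> 0" and f0: "f 0 = 0"
    and lfh: "\<forall>y w. y \<noteq> w \<and> max (V y) (V w) \<le> V x \<longrightarrow> norm (f y - f w) / norm (y - w) \<le> L"
    and L: "L > 0" and b: "b > 0" and t: "0 \<le> t" "t \<le> b / L"
  shows "norm (z t x) \<le> exp b * norm x \<and> norm (z t x - x) \<le> t * (L * exp b * norm x)"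
proof -
  have zx: "z 0 x = x" using fl by (simp add: is_flow_def)
  have fb: "norm (f (z s x)) \<le> L * norm (z s x)" if "0 \<le> s" for s
  proof (rule fbnd[OF f0 V0 _ Vnn lfh])
    show "V (z s x) \<le> V x" using V_mono[OF C1 fl neg, of 0 s x] that zx by simp
  qed
  have zb: "norm (z s x) \<le> exp b * norm x" if "0 \<le> s" "s \<le> b / L" for s
  proof -
    have "norm (z s x) \<le> exp (L * s) * norm x"
      using gronwall_norm[OF fl _ that(1), of L x] L fb zx by simp
    also have "\<dots> \<le> exp b * norm x"
    proof -
      have "L * s \<le> b" using that L by (simp add: field_simps)
      thus ?thesis by (simp add: mult_right_mono)
    qed
    finally show ?thesis .
  qed
  have "norm (z t x - x) \<le> t * (L * exp b * norm x)"
  proof (rule disp[OF fl t(1)])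
    fix s assume "0 < s" "s < t"
    hence "norm (f (z s x)) \<le> L * norm (z s x)" "norm (z s x) \<le> exp b * norm x"
      using fb zb t by auto
    thus "norm (f (z s x)) \<le> L * exp b * norm x" using L
      by (metis mult.assoc mult_left_mono order_trans less_imp_le)
  qed
  with zb[OF t] show ?thesis by simp
qed

lemma loclip_cont:
  fixes f :: "'a::{real_normed_vector,perfect_space} \<Rightarrow> 'b::metric_space"
  assumes "loc_lipschitz f"
  shows "continuous_on UNIV f"
proof -
  have "isCont f x" for x
  proof -
    obtain u L where u: "u > 0" "lipschitz_on L (cball x u) f"
      using assms unfolding loc_lipschitz_def by blast
    have "continuous_on (cball x u) f" using u(2) by (rule lipschitz_on_continuous_on)
    moreover have "x \<in> interior (cball x u)" using u(1) by simp
    ultimately show ?thesis using continuous_on_interior by blast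
  qed
  thus ?thesis by (simp add: continuous_on_eq_continuous_at)
qed

definition infc :: "('a::real_normed_vector \<Rightarrow> real) \<Rightarrow> 'a \<Rightarrow> real" where
  "infc g x = Inf (range (\<lambda>y. g y + norm (x - y)))"

lemma infc_le: assumes "\<And>y. g y \<ge> 0" shows "infc g x \<le> g y + norm (x - y)"
  unfolding infc_def
  by (rule cInf_lower) (auto intro!: bdd_belowI[where m=0] add_nonneg_nonneg assms)

lemma infc_ge: assumes "\<And>y. m \<le> g y + norm (x - y)" shows "m \<le> infc g x"
  unfolding infc_def by (rule cInf_greatest) (auto intro: assms)

lemma infc_nn: assumes "\<And>y. g y \<ge> 0" shows "infc g x \<ge> 0"
  by (rule infc_ge) (simp add: add_nonneg_nonneg assms)

lemma infc_lip: assumes "\<And>y. g y \<ge> 0" shows "infc g x \<le> infc g x' + norm (x - x')"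
proof -
  have "infc g x - norm (x - x') \<le> infc g x'"
  proof (rule infc_ge)
    fix y
    have "infc g x \<le> g y + norm (x - y)" by (rule infc_le[OF assms])
    also have "norm (x - y) \<le> norm (x' - y) + norm (x - x')"
      using norm_triangle_ineq[of "x - x'" "x' - y"] by simp
    finally show "infc g x - norm (x - x') \<le> g y + norm (x' - y)" by simp
  qed
  thus ?thesis by simp
qed

lemma infc_abs: assumes "\<And>y. g y \<ge> 0" shows "\<bar>infc g x - infc g x'\<bar> \<le> norm (x - x')"
  using infc_lip[of g x x', OF assms] infc_lip[of g x' x, OF assms] by (simp add: norm_minus_commute)

lemma infc_lipschitz: assumes "\<And>y. g y \<ge> 0" shows "lipschitz_on 1 S (infc g)"
  by (rule lipschitz_onI) (auto simp: dist_norm dist_real_def infc_abs[OF assms])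

lemma infc_cont: assumes "\<And>y. g y \<ge> 0" shows "continuous_on UNIV (infc g)"
  by (rule lipschitz_on_continuous_on[OF infc_lipschitz[OF assms]])

lemma infc_loclip: assumes "\<And>y. g y \<ge> 0" shows "loc_lipschitz (infc g)"
  unfolding loc_lipschitz_def using infc_lipschitz[of g, OF assms] zero_less_one by blast

lemma infc_below: assumes "\<And>y. g y \<ge> 0" shows "infc g x \<le> g x"
  using infc_le[of g x x, OF assms] by simp

lemma infc_posdef:
  fixes g :: "'a::real_normed_vector \<Rightarrow> real"
  assumes nn: "\<And>y. g y \<ge> 0" and c: "continuous_on UNIV g" and pd: "pos_def g"
  shows "pos_def (infc g)"
  unfolding pos_def_def
proof safe
  show "infc g 0 = 0" using infc_below[of g 0, OF nn] infc_nn[of g 0, OF nn] pd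
    by (simp add: pos_def_def)
next
  fix x :: 'a assume x: "x \<noteq> 0"
  hence gx: "g x > 0" using pd by (simp add: pos_def_def)
  have "isCont g x" using c by (simp add: continuous_on_eq_continuous_at)
  then obtain d where d: "d > 0" "\<And>y. dist y x < d \<Longrightarrow> dist (g y) (g x) < g x / 2"
    using gx unfolding continuous_at_eps_delta by (metis half_gt_zero)
  have "min (g x / 2) d \<le> infc g x"
  proof (rule infc_ge)
    fix y
    show "min (g x / 2) d \<le> g y + norm (x - y)"
    proof (cases "dist y x < d")
      case True
      hence "\<bar>g y - g x\<bar> < g x / 2" using d(2) by (simp add: dist_real_def)
      hence "g y > g x / 2" by linarith
      thus ?thesis by (smt (verit) norm_ge_zero)
    next
      case False
      hence "norm (x - y) \<ge> d" by (simp add: dist_norm norm_minus_commute)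
      thus ?thesis using nn[of y] by linarith
    qed
  qed
  moreover have "min (g x / 2) d > 0" using gx d by simp
  ultimately show "infc g x > 0" by linarith
qed

lemma ii_arith:
  fixes \<phi> :: "real \<Rightarrow> real"
  assumes A: "A > 0" and L: "L > 0" and b: "b > 0" and n: "n > 0" and S: "S = L * exp b * n"
    and h: "0 \<le> h" "h \<le> b / L"
    and key: "\<And>t. 0 \<le> t \<Longrightarrow> t \<le> b / L \<Longrightarrow> \<phi> t \<le> \<phi> 0 - A * t + S * t^2 / 2"
    and mono: "\<And>s t. 0 \<le> s \<Longrightarrow> s \<le> t \<Longrightarrow> \<phi> t \<le> \<phi> s"
  shows "\<phi> h \<le> \<phi> 0 - h * (A^2 / (2 * (1 + A + b * exp b * n)))"
proof -
  have Sp: "S > 0" using S L n by simp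
  define Wt where "Wt = A^2 / (2 * (1 + A + b * exp b * n))"
  have den: "1 + A + b * exp b * n > 0" using A b n by (simp add: add_pos_pos)
  have Wt1: "Wt \<le> A / 2"
    unfolding Wt_def using A den b n by (simp add: field_simps power2_eq_square)
  have Wt2: "Wt \<le> A^2 / (2 * (b * exp b * n))"
    unfolding Wt_def using A den b n by (intro divide_left_mono) (auto simp: mult_pos_pos)
  show ?thesis
  proof (cases "h \<le> A / S")
    case True
    have "S * h \<le> A" using True Sp by (simp add: field_simps)
    hence "S * h^2 / 2 \<le> A * h / 2" using h(1) by (simp add: power2_eq_square mult_right_mono mult.assoc[symmetric])
    moreover have "h * Wt \<le> A * h / 2" using mult_left_mono[OF Wt1 h(1)] by (simp add: mult.commute)
    ultimately show ?thesis using key[OF h] unfolding Wt_def[symmetric] by linarith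
  next
    case False
    define t0 where "t0 = A / S"
    have t0: "0 \<le> t0" "t0 \<le> h" using False A Sp by (auto simp: t0_def)
    have "\<phi> h \<le> \<phi> t0" by (rule mono[OF t0])
    also have "\<dots> \<le> \<phi> 0 - A * t0 + S * t0^2 / 2" using key t0 h by auto
    also have "\<dots> = \<phi> 0 - A^2 / (2 * S)" using Sp by (simp add: t0_def field_simps power2_eq_square)
    also have "A^2 / (2 * S) \<ge> h * Wt"
    proof -
      have "h * Wt \<le> (b / L) * (A^2 / (2 * (b * exp b * n)))"
        using h Wt2 den by (intro mult_mono) (auto simp: Wt_def)
      also have "\<dots> = A^2 / (2 * S)" using S L b n by (simp add: field_simps)
      finally show ?thesis .
    qed
    hence "\<phi> 0 - A^2 / (2 * S) \<le> \<phi> 0 - h * Wt" by simp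
    finally show ?thesis unfolding Wt_def .
  qed
qed

theorem lemma4p3:
  fixes f :: "real^'n \<Rightarrow> real^'n"
    and z :: "real \<Rightarrow> real^'n \<Rightarrow> real^'n"
    and V :: "real^'n \<Rightarrow> real"
    and gV :: "real^'n \<Rightarrow> real^'n"
  assumes f_lip: "loc_lipschitz f"
    and f0: "f 0 = 0"
    and flow: "is_flow f z"
    and lyap: "lyapunov V gV f"
  shows
    "(\<exists>W :: real^'n \<Rightarrow> real. loc_lipschitz W \<and> pos_def W \<and> (\<forall>x. W x \<le> - (gV x \<bullet> f x)))
   \<and> (\<forall>lf :: real^'n \<Rightarrow> real.
        continuous_on UNIV lf \<and> (\<forall>x. lf x > 0) \<and>
        (\<forall>x. x \<noteq> 0 \<longrightarrow> (\<forall>y w. y \<noteq> w \<and> max (V y) (V w) \<le> V x \<longrightarrow>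
             norm (f y - f w) / norm (y - w) \<le> lf x))
        \<longrightarrow> (\<forall>b>0. \<exists>Wt :: real^'n \<Rightarrow> real. continuous_on UNIV Wt \<and> pos_def Wt \<and>
               (\<forall>x. \<forall>h\<in>{0..b / lf x}. V (z h x) \<le> V x - h * Wt x)))
   \<and> (\<forall>b>0. \<forall>lf :: real^'n \<Rightarrow> real. \<forall>W :: real^'n \<Rightarrow> real. \<forall>lW :: real^'n \<Rightarrow> real.
        continuous_on UNIV lf \<and> (\<forall>x. lf x > 0) \<and>
        (\<forall>x. x \<noteq> 0 \<longrightarrow> (\<forall>y w. y \<noteq> w \<and> max (V y) (V w) \<le> V x \<longrightarrow>
             norm (f y - f w) / norm (y - w) \<le> lf x)) \<and>
        loc_lipschitz W \<and> pos_def W \<and> (\<forall>x. W x \<le> - (gV x \<bullet> f x)) \<and>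
        continuous_on UNIV lW \<and> pos_def lW \<and>
        (\<forall>x. x \<noteq> 0 \<longrightarrow> (\<forall>y w. y \<noteq> w \<and> max (norm y) (norm w) \<le> exp b * norm x \<longrightarrow>
             \<bar>W y - W w\<bar> / norm (y - w) \<le> lW x)) \<and>
        (\<exists>\<epsilon>>0. \<exists>c>0. \<forall>x\<in>ball 0 \<epsilon>. norm x * lW x \<le> c * W x)
        \<longrightarrow> (\<forall>lam\<in>{0<..<1}. \<forall>\<phi> :: real^'n \<Rightarrow> real.
               continuous_on UNIV \<phi> \<and> (\<forall>x. \<phi> x > 0) \<and>
               (\<forall>x. x \<noteq> 0 \<longrightarrow> \<phi> x \<le> min (b / lf x)
                   ((1 - lam) * exp (- b) * W x / (norm x * lW x * lf x)))
               \<longrightarrow> (\<forall>x. \<forall>h\<in>{0..\<phi> x}. V (z h x) \<le> V x - lam * h * W x)))"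
proof -
  have C1: "C1_with_gradient V gV" and pdV: "pos_def V"
    and negx: "\<And>x. x \<noteq> 0 \<Longrightarrow> gV x \<bullet> f x < 0"
    using lyap by (auto simp: lyapunov_def)
  have neg: "gV y \<bullet> f y \<le> 0" for y
    using negx[of y] f0 by (cases "y = 0") auto
  have V0: "V 0 = 0"
    using pdV unfolding pos_def_def by auto
  have Vnn: "V x \<ge> 0" for x using pdV V0 unfolding pos_def_def by (cases "x = 0") (auto intro: less_imp_le)
  have zx: "z 0 x = x" for x using flow by (simp add: is_flow_def)
  have dec: "V (z t x) \<le> V x" if "0 \<le> t" for t x
    using V_mono[OF C1 flow neg, of 0 t x] that zx by simp
  define g where "g = (\<lambda>y. - (gV y \<bullet> f y))"
  have gnn: "\<And>y. g y \<ge> 0" using neg by (simp add: g_def)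
  have gc: "continuous_on UNIV g"
  proof -
    have "continuous_on UNIV gV" using C1 by (simp add: C1_with_gradient_def)
    moreover have "continuous_on UNIV f" by (rule loclip_cont[OF f_lip])
    ultimately show ?thesis unfolding g_def by (intro continuous_intros)
  qed
  have gpd: "pos_def g" unfolding pos_def_def g_def using f0 negx by auto
  define W1 where "W1 = infc g"
  have W1_lip: "W1 x \<le> W1 y + norm (x - y)" for x y
    unfolding W1_def by (rule infc_lip[of g, OF gnn])
  have W1_le: "W1 x \<le> g x" for x unfolding W1_def by (rule infc_below[of g, OF gnn])
  have W1_pd: "pos_def W1" unfolding W1_def by (rule infc_posdef[OF gnn gc gpd])
  have W1_nn: "W1 x \<ge> 0" for x unfolding W1_def by (rule infc_nn[of g, OF gnn])
  have W1_c: "continuous_on UNIV W1" unfolding W1_def by (rule infc_cont[of g, OF gnn])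
  have P1: "\<exists>W :: real^'n \<Rightarrow> real. loc_lipschitz W \<and> pos_def W \<and> (\<forall>x. W x \<le> - (gV x \<bullet> f x))"
    using W1_pd W1_le infc_loclip[of g, OF gnn] unfolding W1_def g_def by blast
  have P2: "\<forall>lf :: real^'n \<Rightarrow> real.
        continuous_on UNIV lf \<and> (\<forall>x. lf x > 0) \<and>
        (\<forall>x. x \<noteq> 0 \<longrightarrow> (\<forall>y w. y \<noteq> w \<and> max (V y) (V w) \<le> V x \<longrightarrow>
             norm (f y - f w) / norm (y - w) \<le> lf x))
        \<longrightarrow> (\<forall>b>0. \<exists>Wt :: real^'n \<Rightarrow> real. continuous_on UNIV Wt \<and> pos_def Wt \<and>
               (\<forall>x. \<forall>h\<in>{0..b / lf x}. V (z h x) \<le> V x - h * Wt x))"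
  proof (intro allI impI)
    fix lf :: "real^'n \<Rightarrow> real" and b :: real
    assume H: "continuous_on UNIV lf \<and> (\<forall>x. lf x > 0) \<and>
        (\<forall>x. x \<noteq> 0 \<longrightarrow> (\<forall>y w. y \<noteq> w \<and> max (V y) (V w) \<le> V x \<longrightarrow>
             norm (f y - f w) / norm (y - w) \<le> lf x))"
      and b: "b > 0"
    have lfp: "\<And>x. lf x > 0" using H by blast
    have lfh: "\<And>x. x \<noteq> 0 \<Longrightarrow> \<forall>y w. y \<noteq> w \<and> max (V y) (V w) \<le> V x \<longrightarrow>
             norm (f y - f w) / norm (y - w) \<le> lf x" using H by blast
    define Wt where "Wt = (\<lambda>x. (W1 x)^2 / (2 * (1 + W1 x + b * exp b * norm x)))"
    have den: "2 * (1 + W1 x + b * exp b * norm x) > 0" for x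
      using W1_nn[of x] b by (simp add: add_pos_nonneg)
    have "continuous_on UNIV Wt"
      unfolding Wt_def using den W1_c by (intro continuous_intros) (auto simp: less_imp_neq[symmetric])
    moreover have "pos_def Wt"
      using W1_pd den unfolding Wt_def pos_def_def by auto
    moreover have "\<forall>x. \<forall>h\<in>{0..b / lf x}. V (z h x) \<le> V x - h * Wt x"
    proof (intro allI ballI)
      fix x h assume h: "h \<in> {0..b / lf x}"
      show "V (z h x) \<le> V x - h * Wt x"
      proof (cases "x = 0")
        case True
        thus ?thesis using dec[of h x] h W1_pd by (simp add: Wt_def pos_def_def)
      next
        case False
        define L where "L = lf x"
        have L: "L > 0" using lfp by (simp add: L_def)
        define S where "S = L * exp b * norm x"
        have A: "W1 x > 0" using W1_pd False by (simp add: pos_def_def)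
        have key: "V (z t x) \<le> V (z 0 x) - W1 x * t + S * t^2 / 2" if t: "0 \<le> t" "t \<le> b / L" for t
        proof (rule V_bound[OF C1 flow t(1)])
          fix s assume s: "0 < s" "s < t"
          have tr: "norm (z s x - x) \<le> s * S"
            using traj[OF C1 flow neg V0 Vnn f0 lfh[OF False] _ b, of s, folded L_def] L s t
            by (simp add: S_def)
          have "W1 x \<le> W1 (z s x) + norm (x - z s x)" by (rule W1_lip)
          also have "\<dots> \<le> g (z s x) + s * S" using W1_le[of "z s x"] tr by (simp add: norm_minus_commute)
          finally show "gV (z s x) \<bullet> f (z s x) \<le> - W1 x + S * s" by (simp add: g_def algebra_simps)
        qed
        have "V (z h x) \<le> V (z 0 x) - h * (W1 x ^ 2 / (2 * (1 + W1 x + b * exp b * norm x)))"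
        proof (rule ii_arith[OF A L b _ S_def])
          show "0 < norm x" using False by simp
          show "0 \<le> h" "h \<le> b / L" using h by (auto simp: L_def)
          show "\<And>t. 0 \<le> t \<Longrightarrow> t \<le> b / L \<Longrightarrow> V (z t x) \<le> V (z 0 x) - W1 x * t + S * t^2 / 2"
            by (rule key)
          show "\<And>s t. 0 \<le> s \<Longrightarrow> s \<le> t \<Longrightarrow> V (z t x) \<le> V (z s x)"
            by (rule V_mono[OF C1 flow neg])
        qed
        thus ?thesis by (simp add: zx Wt_def)
      qed
    qed
    ultimately show "\<exists>Wt :: real^'n \<Rightarrow> real. continuous_on UNIV Wt \<and> pos_def Wt \<and>
               (\<forall>x. \<forall>h\<in>{0..b / lf x}. V (z h x) \<le> V x - h * Wt x)" by blast
  qed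
  have P3: "\<forall>b>0. \<forall>lf :: real^'n \<Rightarrow> real. \<forall>W :: real^'n \<Rightarrow> real. \<forall>lW :: real^'n \<Rightarrow> real.
        continuous_on UNIV lf \<and> (\<forall>x. lf x > 0) \<and>
        (\<forall>x. x \<noteq> 0 \<longrightarrow> (\<forall>y w. y \<noteq> w \<and> max (V y) (V w) \<le> V x \<longrightarrow>
             norm (f y - f w) / norm (y - w) \<le> lf x)) \<and>
        loc_lipschitz W \<and> pos_def W \<and> (\<forall>x. W x \<le> - (gV x \<bullet> f x)) \<and>
        continuous_on UNIV lW \<and> pos_def lW \<and>
        (\<forall>x. x \<noteq> 0 \<longrightarrow> (\<forall>y w. y \<noteq> w \<and> max (norm y) (norm w) \<le> exp b * norm x \<longrightarrow>
             \<bar>W y - W w\<bar> / norm (y - w) \<le> lW x)) \<and>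
        (\<exists>\<epsilon>>0. \<exists>c>0. \<forall>x\<in>ball 0 \<epsilon>. norm x * lW x \<le> c * W x)
        \<longrightarrow> (\<forall>lam\<in>{0<..<1}. \<forall>\<phi> :: real^'n \<Rightarrow> real.
               continuous_on UNIV \<phi> \<and> (\<forall>x. \<phi> x > 0) \<and>
               (\<forall>x. x \<noteq> 0 \<longrightarrow> \<phi> x \<le> min (b / lf x)
                   ((1 - lam) * exp (- b) * W x / (norm x * lW x * lf x)))
               \<longrightarrow> (\<forall>x. \<forall>h\<in>{0..\<phi> x}. V (z h x) \<le> V x - lam * h * W x))"
  proof (intro allI impI ballI)
    fix b :: real and lf W lW :: "real^'n \<Rightarrow> real" and lam :: real and \<phi> :: "real^'n \<Rightarrow> real"
      and x :: "real^'n" and h :: real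
    assume b: "b > 0"
    assume H: "continuous_on UNIV lf \<and> (\<forall>x. lf x > 0) \<and>
        (\<forall>x. x \<noteq> 0 \<longrightarrow> (\<forall>y w. y \<noteq> w \<and> max (V y) (V w) \<le> V x \<longrightarrow>
             norm (f y - f w) / norm (y - w) \<le> lf x)) \<and>
        loc_lipschitz W \<and> pos_def W \<and> (\<forall>x. W x \<le> - (gV x \<bullet> f x)) \<and>
        continuous_on UNIV lW \<and> pos_def lW \<and>
        (\<forall>x. x \<noteq> 0 \<longrightarrow> (\<forall>y w. y \<noteq> w \<and> max (norm y) (norm w) \<le> exp b * norm x \<longrightarrow>
             \<bar>W y - W w\<bar> / norm (y - w) \<le> lW x)) \<and>
        (\<exists>\<epsilon>>0. \<exists>c>0. \<forall>x\<in>ball 0 \<epsilon>. norm x * lW x \<le> c * W x)"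
    assume lam: "lam \<in> {0<..<1}"
    assume P: "continuous_on UNIV \<phi> \<and> (\<forall>x. \<phi> x > 0) \<and>
               (\<forall>x. x \<noteq> 0 \<longrightarrow> \<phi> x \<le> min (b / lf x)
                   ((1 - lam) * exp (- b) * W x / (norm x * lW x * lf x)))"
    assume h: "h \<in> {0..\<phi> x}"
    have lfp: "\<And>x. lf x > 0" using H by blast
    have lfh: "\<And>x. x \<noteq> 0 \<Longrightarrow> \<forall>y w. y \<noteq> w \<and> max (V y) (V w) \<le> V x \<longrightarrow>
             norm (f y - f w) / norm (y - w) \<le> lf x" using H by blast
    have Wpd: "pos_def W" and Wle: "\<And>x. W x \<le> - (gV x \<bullet> f x)" and lWpd: "pos_def lW"
      using H by blast+
    have lWh: "\<And>x. x \<noteq> 0 \<Longrightarrow> \<forall>y w. y \<noteq> w \<and> max (norm y) (norm w) \<le> exp b * norm x \<longrightarrow>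
             \<bar>W y - W w\<bar> / norm (y - w) \<le> lW x" using H by blast
    have ph: "\<And>x. x \<noteq> 0 \<Longrightarrow> \<phi> x \<le> min (b / lf x)
                   ((1 - lam) * exp (- b) * W x / (norm x * lW x * lf x))" using P by blast
    show "V (z h x) \<le> V x - lam * h * W x"
    proof (cases "x = 0")
      case True
      thus ?thesis using dec[of h x] h Wpd by (simp add: pos_def_def)
    next
      case False
      define L where "L = lf x"
      have L: "L > 0" using lfp by (simp add: L_def)
      define S where "S = L * exp b * norm x"
      define K where "K = lW x * S"
      have lWx: "lW x > 0" using lWpd False by (simp add: pos_def_def)
      have n: "norm x > 0" using False by simp
      have h0: "0 \<le> h" using h by simp
      have hb: "h \<le> b / L" using h ph[OF False] by (auto simp: L_def)
      have hw: "h \<le> (1 - lam) * exp (- b) * W x / (norm x * lW x * L)"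
        using h ph[OF False] by (auto simp: L_def)
      have key: "V (z h x) \<le> V (z 0 x) - W x * h + K * h^2 / 2"
      proof (rule V_bound[OF C1 flow h0])
        fix s assume s: "0 < s" "s < h"
        have tr: "norm (z s x) \<le> exp b * norm x \<and> norm (z s x - x) \<le> s * S"
          using traj[OF C1 flow neg V0 Vnn f0 lfh[OF False] _ b, of s, folded L_def] L s hb
          by (simp add: S_def)
        have "W x - W (z s x) \<le> lW x * norm (z s x - x)"
        proof (cases "z s x = x")
          case True thus ?thesis by simp
        next
          case ne: False
          have "1 \<le> exp b" using b by simp
          hence "norm x \<le> exp b * norm x" using mult_right_mono[of 1 "exp b" "norm x"] by simp
          hence "\<bar>W (z s x) - W x\<bar> / norm (z s x - x) \<le> lW x"
            using lWh[OF False] ne tr by auto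
          moreover have "norm (z s x - x) > 0" using ne by simp
          ultimately have "\<bar>W (z s x) - W x\<bar> \<le> lW x * norm (z s x - x)"
            by (simp add: divide_le_eq mult.commute)
          thus ?thesis by linarith
        qed
        also have "\<dots> \<le> lW x * (s * S)" using tr lWx by (simp add: mult_left_mono)
        finally have "W x - W (z s x) \<le> K * s" by (simp add: K_def algebra_simps)
        thus "gV (z s x) \<bullet> f (z s x) \<le> - W x + K * s" using Wle[of "z s x"] by linarith
      qed
      have "K * h \<le> (1 - lam) * W x"
      proof -
        have "K * h \<le> K * ((1 - lam) * exp (- b) * W x / (norm x * lW x * L))"
          using hw lWx L n by (intro mult_left_mono) (auto simp: K_def S_def)
        also have "\<dots> = (1 - lam) * W x" using lWx L n
          by (simp add: K_def S_def exp_minus field_simps)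
        finally show ?thesis .
      qed
      hence "K * h^2 / 2 \<le> (1 - lam) * W x * h / 2"
        using h0 by (simp add: power2_eq_square mult_right_mono mult.assoc[symmetric])
      moreover have "(1 - lam) * W x * h \<ge> 0"
      proof -
        have "W x > 0" using Wpd False by (simp add: pos_def_def)
        thus ?thesis using lam h0 by (simp add: mult_nonneg_nonneg)
      qed
      ultimately show ?thesis using key zx[of x] by (simp add: algebra_simps)
    qed
  qed
  show ?thesis using P1 P2 P3 by blast
qed

end
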